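(* Let $p$ be a prime, $n\ge1$, $\mathbb{F}=\mathbb{F}_{p^n}$, $F=p^n$, and $f,g:\mathbb{F}\to[0,1]$. Let $k$ be an integer with $2\le k\le F$, let $A$ be a set of $k$ points at which $|\hat f|$ takes its $k$ largest values (i.e. $|\hat f(a)|\ge|\hat f(b)|$ for all $a\in A$, $b\notin A$), and $B=A-A$. Let $n'$ be an integer with $$1+\frac{\log\binom{k}{2}}{\log p}\ \le\ n'\ <\ 2+\frac{\log\binom{k}{2}}{\log p},\qquad n'\le n,$$ and let $S$ be the set of all $\mathbb{F}_p$-subspaces of $\mathbb{F}$ of dimension $n'$. Suppose $\mathbb{E}(g)>8p^{-1/2}k^{-1}$. Then there exists $W\in S$ such that (i) $B\cap W^\perp=\{0\}$, and (ii) at least $F/4$ elements $t\in\mathbb{F}$ satisfy $\sum_{m\in t+W}g(m)\ge \mathbb{E}(g)|W|/2$.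
   Context: Identify $\mathbb{F}$ with $\mathbb{F}_p^n$ via a fixed standard $\mathbb{F}_p$-basis and let $a\cdot m$ be the dot product; $W^\perp=\{v: v\cdot w=0\ \forall w\in W\}$. With $\omega=e^{2\pi i/p}$, $\hat f(a)=\sum_m f(m)\omega^{a\cdot m}$. $\mathbb{E}(g)=F^{-1}\sum_m g(m)$. *)

theory Defs
  imports Complex_Main "HOL-Computational_Algebra.Primes"
begin

text \<open>The field F_{p^n} is identified with F_p^n: vectors are functions nat => int,
  with components in {0..<p} at indices < n and 0 elsewhere.\<close>

definition Fvec :: "nat \<Rightarrow> nat \<Rightarrow> (nat \<Rightarrow> int) set" where
  "Fvec p n = {v. (\<forall>i<n. 0 \<le> v i \<and> v i < int p) \<and> (\<forall>i\<ge>n. v i = 0)}"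

definition vzero :: "nat \<Rightarrow> int" where "vzero = (\<lambda>i. 0)"

definition vadd :: "nat \<Rightarrow> (nat \<Rightarrow> int) \<Rightarrow> (nat \<Rightarrow> int) \<Rightarrow> (nat \<Rightarrow> int)" where
  "vadd p u v = (\<lambda>i. (u i + v i) mod int p)"

definition vsub :: "nat \<Rightarrow> (nat \<Rightarrow> int) \<Rightarrow> (nat \<Rightarrow> int) \<Rightarrow> (nat \<Rightarrow> int)" where
  "vsub p u v = (\<lambda>i. (u i - v i) mod int p)"

definition smul :: "nat \<Rightarrow> int \<Rightarrow> (nat \<Rightarrow> int) \<Rightarrow> (nat \<Rightarrow> int)" where
  "smul p c v = (\<lambda>i. (c * v i) mod int p)"

definition dotp :: "nat \<Rightarrow> nat \<Rightarrow> (nat \<Rightarrow> int) \<Rightarrow> (nat \<Rightarrow> int) \<Rightarrow> int" where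
  "dotp p n a m = (\<Sum>i<n. a i * m i) mod int p"

definition omega :: "nat \<Rightarrow> complex" where
  "omega p = exp (2 * pi * \<i> / of_nat p)"

definition fourier :: "nat \<Rightarrow> nat \<Rightarrow> ((nat \<Rightarrow> int) \<Rightarrow> real) \<Rightarrow> (nat \<Rightarrow> int) \<Rightarrow> complex" where
  "fourier p n f a = (\<Sum>m\<in>Fvec p n. of_real (f m) * omega p ^ nat (dotp p n a m))"

definition expect :: "nat \<Rightarrow> nat \<Rightarrow> ((nat \<Rightarrow> int) \<Rightarrow> real) \<Rightarrow> real" where
  "expect p n g = (\<Sum>m\<in>Fvec p n. g m) / real (p ^ n)"

definition is_subspace :: "nat \<Rightarrow> nat \<Rightarrow> (nat \<Rightarrow> int) set \<Rightarrow> bool" where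
  "is_subspace p n W \<longleftrightarrow> W \<subseteq> Fvec p n \<and> vzero \<in> W \<and>
     (\<forall>u\<in>W. \<forall>v\<in>W. vadd p u v \<in> W) \<and> (\<forall>c\<in>{0..<int p}. \<forall>v\<in>W. smul p c v \<in> W)"

definition subspace_dim :: "nat \<Rightarrow> nat \<Rightarrow> (nat \<Rightarrow> int) set \<Rightarrow> nat \<Rightarrow> bool" where
  "subspace_dim p n W d \<longleftrightarrow> is_subspace p n W \<and> card W = p ^ d"

definition perp :: "nat \<Rightarrow> nat \<Rightarrow> (nat \<Rightarrow> int) set \<Rightarrow> (nat \<Rightarrow> int) set" where
  "perp p n W = {v \<in> Fvec p n. \<forall>w\<in>W. dotp p n v w = 0}"

definition translate :: "nat \<Rightarrow> (nat \<Rightarrow> int) \<Rightarrow> (nat \<Rightarrow> int) set \<Rightarrow> (nat \<Rightarrow> int) set" where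
  "translate p t W = vadd p t ` W"

end

theory Submission
  imports Defs "HOL-Number_Theory.Cong" "HOL-Library.FuncSet"
begin


definition boxs :: "nat \<Rightarrow> 'a set \<Rightarrow> ('a \<Rightarrow> int) set" where
  "boxs p I = {v. (\<forall>i\<in>I. 0 \<le> v i \<and> v i < int p) \<and> (\<forall>i. i \<notin> I \<longrightarrow> v i = 0)}"

lemma Fvec_boxs: "Fvec p n = boxs p {..<n}"
  unfolding Fvec_def boxs_def by auto

lemma card_boxs:
  assumes "finite I"
  shows "card (boxs p I) = p ^ card I"
proof -
  have "bij_betw (\<lambda>v. restrict v I) (boxs p I) (PiE I (\<lambda>_. {0..<int p}))"
  proof (rule bij_betw_byWitness[where f'="\<lambda>f i. if i \<in> I then f i else 0"])
    show "\<forall>a\<in>boxs p I. (\<lambda>i. if i \<in> I then restrict a I i else 0) = a"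
      unfolding boxs_def by (auto simp: fun_eq_iff)
    show "\<forall>a'\<in>PiE I (\<lambda>_. {0..<int p}). restrict (\<lambda>i. if i \<in> I then a' i else 0) I = a'"
      by (auto simp: fun_eq_iff PiE_def extensional_def)
    show "(\<lambda>v. restrict v I) ` boxs p I \<subseteq> PiE I (\<lambda>_. {0..<int p})"
      unfolding boxs_def by auto
    show "(\<lambda>f i. if i \<in> I then f i else 0) ` PiE I (\<lambda>_. {0..<int p}) \<subseteq> boxs p I"
      unfolding boxs_def by auto
  qed
  then have "card (boxs p I) = card (PiE I (\<lambda>_. {0..<int p}))" by (rule bij_betw_same_card)
  also have "\<dots> = p ^ card I" using assms by (simp add: card_PiE)
  finally show ?thesis .
qed

lemma finite_boxs: "finite I \<Longrightarrow> p > 0 \<Longrightarrow> finite (boxs p I)"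
  using card_boxs[of I p] by (metis card.infinite nat_zero_less_power_iff neq0_conv)

lemma mod_inv_exists:
  assumes "prime p" "0 < x" "x < int p"
  shows "\<exists>y. (x * y) mod int p = 1"
proof -
  have pr: "prime (int p)" using assms by simp
  have "\<not> int p dvd x" using assms zdvd_not_zless by blast
  then have "coprime x (int p)" using pr prime_imp_coprime coprime_commute by blast
  then obtain y where "[x * y = 1] (mod int p)" using cong_solve_coprime_int by blast
  moreover have "(1::int) mod int p = 1" using prime_gt_1_nat[OF assms(1)] by simp
  ultimately show ?thesis unfolding cong_def by auto
qed

lemma n_sub: "finite A \<Longrightarrow> card {B. B \<subseteq> A \<and> card B = k} = card A choose k"
  by (rule n_subsets)



lemma Fvec_iff: "v \<in> Fvec p n \<longleftrightarrow> (\<forall>i<n. 0 \<le> v i \<and> v i < int p) \<and> (\<forall>i\<ge>n. v i = 0)"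
  unfolding Fvec_def by simp

lemma Fvec_eqI: "u \<in> Fvec p n \<Longrightarrow> v \<in> Fvec p n \<Longrightarrow> (\<And>i. i < n \<Longrightarrow> u i = v i) \<Longrightarrow> u = v"
proof (rule ext)
  fix i assume u: "u \<in> Fvec p n" and v: "v \<in> Fvec p n" and h: "\<And>i. i < n \<Longrightarrow> u i = v i"
  show "u i = v i"
  proof (cases "i < n")
    case True then show ?thesis using h by simp
  next
    case False then show ?thesis using u v unfolding Fvec_def by simp
  qed
qed

lemma Fvec_mod: "v \<in> Fvec p n \<Longrightarrow> v i mod int p = v i"
  unfolding Fvec_def by (cases "i < n") auto

lemma vadd_Fvec: "p > 0 \<Longrightarrow> u \<in> Fvec p n \<Longrightarrow> v \<in> Fvec p n \<Longrightarrow> vadd p u v \<in> Fvec p n"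
  unfolding Fvec_def vadd_def by auto

lemma vsub_Fvec: "p > 0 \<Longrightarrow> u \<in> Fvec p n \<Longrightarrow> v \<in> Fvec p n \<Longrightarrow> vsub p u v \<in> Fvec p n"
  unfolding Fvec_def vsub_def by auto

lemma smul_Fvec: "p > 0 \<Longrightarrow> v \<in> Fvec p n \<Longrightarrow> smul p c v \<in> Fvec p n"
  unfolding Fvec_def smul_def by auto

lemma vzero_Fvec: "p > 0 \<Longrightarrow> vzero \<in> Fvec p n"
  unfolding Fvec_def vzero_def by auto

lemma vadd_comm: "vadd p u v = vadd p v u"
  unfolding vadd_def by (simp add: add.commute)

lemma vadd_vsub_cancel: "u \<in> Fvec p n \<Longrightarrow> vadd p (vsub p u w) w = u"
  unfolding vadd_def vsub_def by (rule ext) (simp add: mod_add_left_eq Fvec_mod)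

lemma vsub_vadd_cancel: "t \<in> Fvec p n \<Longrightarrow> vsub p (vadd p t w) w = t"
  unfolding vadd_def vsub_def by (rule ext) (simp add: mod_diff_left_eq Fvec_mod)

lemma vadd_shift: "vadd p (vadd p t w) (vsub p w' w) = vadd p t w'"
  unfolding vadd_def vsub_def by (rule ext) (simp add: mod_add_eq)

lemma vadd_vzero: "t \<in> Fvec p n \<Longrightarrow> vadd p t vzero = t"
  unfolding vadd_def vzero_def by (rule ext) (simp add: Fvec_mod)

lemma vsub_self: "vsub p a a = vzero"
  unfolding vsub_def vzero_def by simp

lemma bij_vadd: "p > 0 \<Longrightarrow> w \<in> Fvec p n \<Longrightarrow> bij_betw (\<lambda>t. vadd p t w) (Fvec p n) (Fvec p n)"
  by (rule bij_betw_byWitness[where f'="\<lambda>x. vsub p x w"])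
     (auto simp: vadd_vsub_cancel vsub_vadd_cancel vadd_Fvec vsub_Fvec)

lemma sum_vadd_reindex:
  assumes "p > 0" "w \<in> Fvec p n"
  shows "(\<Sum>t\<in>Fvec p n. f (vadd p t w)) = (\<Sum>x\<in>Fvec p n. f x)"
  using sum.reindex_bij_betw[OF bij_vadd[OF assms], of f] by simp

lemma inj_vadd: "W \<subseteq> Fvec p n \<Longrightarrow> inj_on (vadd p t) W"
proof (rule inj_onI)
  fix a b assume W: "W \<subseteq> Fvec p n" and a: "a \<in> W" and b: "b \<in> W" and e: "vadd p t a = vadd p t b"
  have "a = vsub p (vadd p a t) t" using a W by (metis vsub_vadd_cancel subsetD)
  also have "\<dots> = vsub p (vadd p b t) t" using e by (simp add: vadd_comm)
  also have "\<dots> = b" using b W by (metis vsub_vadd_cancel subsetD)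
  finally show "a = b" .
qed



definition gW :: "nat \<Rightarrow> nat \<Rightarrow> nat \<Rightarrow> (nat \<times> nat \<Rightarrow> int) \<Rightarrow> (nat \<Rightarrow> int) set" where
  "gW p n d M = {x \<in> Fvec p n. \<forall>i\<in>{d..<n}. x i = (\<Sum>j<d. M (i,j) * x j) mod int p}"

lemma sum_mod_inner:
  fixes m :: int
  shows "(\<Sum>j\<in>J. c j * (a j mod m)) mod m = (\<Sum>j\<in>J. c j * a j) mod m"
proof -
  have "(\<Sum>j\<in>J. c j * (a j mod m)) mod m = (\<Sum>j\<in>J. (c j * (a j mod m)) mod m) mod m"
    by (simp add: mod_sum_eq)
  also have "\<dots> = (\<Sum>j\<in>J. (c j * a j) mod m) mod m"
    by (simp add: mod_mult_right_eq)
  also have "\<dots> = (\<Sum>j\<in>J. c j * a j) mod m"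
    by (simp add: mod_sum_eq)
  finally show ?thesis .
qed

lemma sum_mod_inner':
  fixes m :: int
  shows "(\<Sum>j\<in>J. (a j mod m) * c j) mod m = (\<Sum>j\<in>J. a j * c j) mod m"
  using sum_mod_inner[of c a m J] by (simp add: mult.commute)

lemma gW_sub: "gW p n d M \<subseteq> Fvec p n"
  unfolding gW_def by auto

lemma gW_zero: "p > 0 \<Longrightarrow> vzero \<in> gW p n d M"
  unfolding gW_def by (auto simp: vzero_Fvec) (simp add: vzero_def)

lemma gW_add:
  assumes p: "p > 0" and x: "x \<in> gW p n d M" and y: "y \<in> gW p n d M"
  shows "vadd p x y \<in> gW p n d M"
proof -
  have xF: "x \<in> Fvec p n" and yF: "y \<in> Fvec p n" using x y gW_sub by blast+
  have "vadd p x y i = (\<Sum>j<d. M (i,j) * vadd p x y j) mod int p" if i: "i \<in> {d..<n}" for i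
  proof -
    have "vadd p x y i = ((\<Sum>j<d. M (i,j) * x j) mod int p + (\<Sum>j<d. M (i,j) * y j) mod int p) mod int p"
      using x y i unfolding gW_def vadd_def by auto
    also have "\<dots> = (\<Sum>j<d. M (i,j) * (x j + y j)) mod int p"
      by (simp add: mod_add_eq sum.distrib distrib_left)
    also have "\<dots> = (\<Sum>j<d. M (i,j) * vadd p x y j) mod int p"
      unfolding vadd_def by (rule sum_mod_inner[symmetric])
    finally show ?thesis .
  qed
  then show ?thesis using vadd_Fvec[OF p xF yF] unfolding gW_def by auto
qed

lemma gW_vsub:
  assumes p: "p > 0" and x: "x \<in> gW p n d M" and y: "y \<in> gW p n d M"
  shows "vsub p x y \<in> gW p n d M"
proof -
  have xF: "x \<in> Fvec p n" and yF: "y \<in> Fvec p n" using x y gW_sub by blast+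
  have "vsub p x y i = (\<Sum>j<d. M (i,j) * vsub p x y j) mod int p" if i: "i \<in> {d..<n}" for i
  proof -
    have "vsub p x y i = ((\<Sum>j<d. M (i,j) * x j) mod int p - (\<Sum>j<d. M (i,j) * y j) mod int p) mod int p"
      using x y i unfolding gW_def vsub_def by auto
    also have "\<dots> = (\<Sum>j<d. M (i,j) * (x j - y j)) mod int p"
      by (simp add: mod_diff_eq sum_subtractf right_diff_distrib)
    also have "\<dots> = (\<Sum>j<d. M (i,j) * vsub p x y j) mod int p"
      unfolding vsub_def by (rule sum_mod_inner[symmetric])
    finally show ?thesis .
  qed
  then show ?thesis using vsub_Fvec[OF p xF yF] unfolding gW_def by auto
qed

lemma gW_smul:
  assumes p: "p > 0" and x: "x \<in> gW p n d M"
  shows "smul p c x \<in> gW p n d M"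
proof -
  have xF: "x \<in> Fvec p n" using x gW_sub by blast
  have "smul p c x i = (\<Sum>j<d. M (i,j) * smul p c x j) mod int p" if i: "i \<in> {d..<n}" for i
  proof -
    have "smul p c x i = (c * ((\<Sum>j<d. M (i,j) * x j) mod int p)) mod int p"
      using x i unfolding gW_def smul_def by auto
    also have "\<dots> = (\<Sum>j<d. M (i,j) * (c * x j)) mod int p"
      by (simp add: mod_mult_right_eq sum_distrib_left algebra_simps)
    also have "\<dots> = (\<Sum>j<d. M (i,j) * smul p c x j) mod int p"
      unfolding smul_def by (rule sum_mod_inner[symmetric])
    finally show ?thesis .
  qed
  then show ?thesis using smul_Fvec[OF p xF] unfolding gW_def by auto
qed


lemma card_gW:
  assumes p: "p > 0" and dn: "d \<le> n"
  shows "card (gW p n d M) = p ^ d"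
proof -
  let ?r = "\<lambda>x::nat\<Rightarrow>int. \<lambda>i. if i < d then x i else 0"
  let ?e = "\<lambda>u::nat\<Rightarrow>int. \<lambda>i. if i < d then u i else if i < n then (\<Sum>j<d. M (i,j) * u j) mod int p else 0"
  have "bij_betw ?r (gW p n d M) (Fvec p d)"
  proof (rule bij_betw_byWitness[where f'="?e"])
    show "\<forall>a\<in>gW p n d M. ?e (?r a) = a"
    proof
      fix a assume a: "a \<in> gW p n d M"
      show "?e (?r a) = a"
      proof (rule ext)
        fix i
        have s: "(\<Sum>j<d. M (i,j) * ?r a j) = (\<Sum>j<d. M (i,j) * a j)" by (rule sum.cong) auto
        have aF: "a \<in> Fvec p n" using a gW_sub by blast
        show "?e (?r a) i = a i"
        proof (cases "i < d")
          case True then show ?thesis by simp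
        next
          case False
          show ?thesis
          proof (cases "i < n")
            case True
            have iI: "i \<in> {d..<n}" using True False by auto
            have ai: "a i = (\<Sum>j<d. M (i,j) * a j) mod int p"
              using a iI unfolding gW_def by blast
            show ?thesis using False True by (simp only: s ai if_False if_True)
          next
            case False2: False
            then show ?thesis using False aF unfolding Fvec_def by simp
          qed
        qed
      qed
    qed
    show "\<forall>a'\<in>Fvec p d. ?r (?e a') = a'"
      unfolding Fvec_def by (auto simp: fun_eq_iff)
    show "?r ` gW p n d M \<subseteq> Fvec p d"
    proof
      fix y assume "y \<in> ?r ` gW p n d M"
      then obtain a where a: "a \<in> gW p n d M" and y: "y = ?r a" by blast
      have aF: "a \<in> Fvec p n" using a gW_sub by blast
      show "y \<in> Fvec p d" using aF dn unfolding y Fvec_def by auto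
    qed
    show "?e ` Fvec p d \<subseteq> gW p n d M"
    proof
      fix x assume "x \<in> ?e ` Fvec p d"
      then obtain u where u: "u \<in> Fvec p d" and x: "x = ?e u" by blast
      have xF: "x \<in> Fvec p n" using u p dn unfolding x Fvec_def by auto
      have "x i = (\<Sum>j<d. M (i,j) * x j) mod int p" if i: "i \<in> {d..<n}" for i
      proof -
        have "(\<Sum>j<d. M (i,j) * x j) = (\<Sum>j<d. M (i,j) * u j)" unfolding x by (rule sum.cong) auto
        then show ?thesis using i unfolding x by auto
      qed
      then show "x \<in> gW p n d M" using xF unfolding gW_def by blast
    qed
  qed
  then have "card (gW p n d M) = card (Fvec p d)" by (rule bij_betw_same_card)
  also have "\<dots> = p ^ d" by (simp add: Fvec_boxs card_boxs)
  finally show ?thesis .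
qed

lemma gW_dim:
  assumes "p > 0" "d \<le> n"
  shows "subspace_dim p n (gW p n d M) d"
proof -
  have "is_subspace p n (gW p n d M)"
    unfolding is_subspace_def
  proof (intro conjI ballI)
    show "gW p n d M \<subseteq> Fvec p n" by (rule gW_sub)
    show "vzero \<in> gW p n d M" using assms(1) by (rule gW_zero)
    show "vadd p u v \<in> gW p n d M" if "u \<in> gW p n d M" "v \<in> gW p n d M" for u v
      using gW_add[OF assms(1) that] .
    show "smul p c v \<in> gW p n d M" if "c \<in> {0..<int p}" "v \<in> gW p n d M" for c v
      using gW_smul[OF assms(1) that(2)] .
  qed
  then show ?thesis by (simp add: subspace_dim_def card_gW[OF assms])
qed


lemma gW_nonzero:
  assumes z: "z \<in> gW p n d M" and nz: "z \<noteq> vzero"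
  shows "\<exists>j<d. z j \<noteq> 0"
proof (rule ccontr)
  assume "\<not> (\<exists>j<d. z j \<noteq> 0)"
  then have h: "\<And>j. j < d \<Longrightarrow> z j = 0" by auto
  have "z = vzero"
  proof (rule ext)
    fix i
    show "z i = vzero i"
    proof (cases "i < d")
      case True then show ?thesis using h by (simp add: vzero_def)
    next
      case False
      show ?thesis
      proof (cases "i < n")
        case True
        have iI: "i \<in> {d..<n}" using True False by auto
        have "z i = (\<Sum>j<d. M (i,j) * z j) mod int p" using z iI unfolding gW_def by blast
        also have "(\<Sum>j<d. M (i,j) * z j) = 0" using h by simp
        finally show ?thesis by (simp add: vzero_def)
      next
        case False then show ?thesis using z gW_sub[of p n d M] unfolding Fvec_def vzero_def by auto
      qed
    qed
  qed
  then show False using nz by simp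
qed

lemma perp_gW_cond:
  assumes p: "p > 1" and dn: "d \<le> n" and bF: "b \<in> Fvec p n" and bp: "b \<in> perp p n (gW p n d M)" and j: "j < d"
  shows "(b j + (\<Sum>i\<in>{d..<n}. b i * M (i,j))) mod int p = 0"
proof -
  define w where "w = (\<lambda>i. if i < d then (if i = j then 1 else 0) else if i < n then M (i,j) mod int p else (0::int))"
  have wF: "w \<in> Fvec p n" using p j dn unfolding w_def Fvec_def by auto
  have "w i = (\<Sum>j'<d. M (i,j') * w j') mod int p" if i: "i \<in> {d..<n}" for i
  proof -
    have "(\<Sum>j'<d. M (i,j') * w j') = (\<Sum>j'<d. if j' = j then M (i,j) else 0)"
      by (rule sum.cong) (auto simp: w_def)
    also have "\<dots> = M (i,j)" using j by simp
    finally show ?thesis using i unfolding w_def by auto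
  qed
  then have wW: "w \<in> gW p n d M" using wF unfolding gW_def by blast
  then have "dotp p n b w = 0" using bp unfolding perp_def by auto
  then have 0: "(\<Sum>i<n. b i * w i) mod int p = 0" unfolding dotp_def .
  have split: "{..<n} = {..<d} \<union> {d..<n}" using dn by auto
  have "(\<Sum>i<n. b i * w i) = (\<Sum>i<d. b i * w i) + (\<Sum>i\<in>{d..<n}. b i * w i)"
    unfolding split by (rule sum.union_disjoint) auto
  also have "(\<Sum>i<d. b i * w i) = (\<Sum>i<d. if i = j then b j else 0)"
    by (rule sum.cong) (auto simp: w_def)
  also have "\<dots> = b j" using j by simp
  also have "(\<Sum>i\<in>{d..<n}. b i * w i) = (\<Sum>i\<in>{d..<n}. b i * (M (i,j) mod int p))"
    by (rule sum.cong) (auto simp: w_def)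
  finally have "(b j + (\<Sum>i\<in>{d..<n}. b i * (M (i,j) mod int p))) mod int p = 0" using 0 by simp
  then have "(b j + (\<Sum>i\<in>{d..<n}. b i * (M (i,j) mod int p)) mod int p) mod int p = 0"
    by (simp add: mod_add_right_eq)
  then show ?thesis by (simp add: sum_mod_inner mod_add_right_eq)
qed

lemma perp_gW_nonzero:
  assumes p: "p > 1" and dn: "d \<le> n" and bF: "b \<in> Fvec p n" and bp: "b \<in> perp p n (gW p n d M)"
    and nz: "b \<noteq> vzero"
  shows "\<exists>i\<in>{d..<n}. b i \<noteq> 0"
proof (rule ccontr)
  assume "\<not> (\<exists>i\<in>{d..<n}. b i \<noteq> 0)"
  then have h: "\<And>i. i \<in> {d..<n} \<Longrightarrow> b i = 0" by auto
  have "b = vzero"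
  proof (rule ext)
    fix i
    show "b i = vzero i"
    proof (cases "i < d")
      case True
      have "(b i + (\<Sum>i'\<in>{d..<n}. b i' * M (i',i))) mod int p = 0"
        by (rule perp_gW_cond[OF p dn bF bp True])
      moreover have "(\<Sum>i'\<in>{d..<n}. b i' * M (i',i)) = 0" using h by simp
      ultimately have "b i mod int p = 0" by simp
      then show ?thesis using Fvec_mod[OF bF] by (simp add: vzero_def)
    next
      case False
      then show ?thesis using h bF unfolding Fvec_def vzero_def
        by (cases "i < n") auto
    qed
  qed
  then show False using nz by simp
qed

lemma dotp_vsub_swap:
  "(dotp p n (vsub p b a) w = 0) \<longleftrightarrow> (dotp p n (vsub p a b) w = 0)"
proof -
  have "dotp p n (vsub p b a) w = (\<Sum>i<n. (b i - a i) * w i) mod int p"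
    unfolding dotp_def vsub_def by (rule sum_mod_inner')
  also have "(\<Sum>i<n. (b i - a i) * w i) = - (\<Sum>i<n. (a i - b i) * w i)"
    by (simp add: sum_negf[symmetric] algebra_simps)
  finally have 1: "dotp p n (vsub p b a) w = (- (\<Sum>i<n. (a i - b i) * w i)) mod int p" .
  have 2: "dotp p n (vsub p a b) w = (\<Sum>i<n. (a i - b i) * w i) mod int p"
    unfolding dotp_def vsub_def by (rule sum_mod_inner')
  show ?thesis unfolding 1 2 by (simp add: dvd_eq_mod_eq_0[symmetric])
qed



lemma fiber_count:
  assumes G: "finite G" and H: "finite H" and h0: "h0 \<in> H"
    and inj: "\<And>h. h \<in> H \<Longrightarrow> \<exists>\<phi>. inj_on \<phi> {x\<in>G. L x = h0} \<and> \<phi> ` {x\<in>G. L x = h0} \<subseteq> {x\<in>G. L x = h}"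
  shows "card H * card {x\<in>G. L x = h0} \<le> card G"
proof -
  have "card H * card {x\<in>G. L x = h0} = (\<Sum>h\<in>H. card {x\<in>G. L x = h0})" by simp
  also have "\<dots> \<le> (\<Sum>h\<in>H. card {x\<in>G. L x = h})"
  proof (rule sum_mono)
    fix h assume "h \<in> H"
    then obtain \<phi> where i: "inj_on \<phi> {x\<in>G. L x = h0}" and s: "\<phi> ` {x\<in>G. L x = h0} \<subseteq> {x\<in>G. L x = h}"
      using inj by blast
    show "card {x\<in>G. L x = h0} \<le> card {x\<in>G. L x = h}"
      by (rule card_inj_on_le[OF i s]) (use G in auto)
  qed
  also have "\<dots> = (\<Sum>h\<in>H. \<Sum>x\<in>{x. x \<in> {x\<in>G. L x \<in> H} \<and> L x = h}. (1::nat))"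
  proof (rule sum.cong[OF refl])
    fix h assume "h \<in> H"
    then have "{x. x \<in> {x\<in>G. L x \<in> H} \<and> L x = h} = {x\<in>G. L x = h}" by auto
    then show "card {x\<in>G. L x = h} = (\<Sum>x\<in>{x. x \<in> {x\<in>G. L x \<in> H} \<and> L x = h}. (1::nat))" by simp
  qed
  also have "\<dots> = (\<Sum>x\<in>{x\<in>G. L x \<in> H}. (1::nat))"
    by (rule sum.group) (use G H in auto)
  also have "\<dots> = card {x\<in>G. L x \<in> H}" by simp
  also have "\<dots> \<le> card G" by (rule card_mono[OF G]) auto
  finally show ?thesis .
qed

definition shiftM :: "nat \<Rightarrow> 'a set \<Rightarrow> ('a \<Rightarrow> int) \<Rightarrow> ('a \<Rightarrow> int) \<Rightarrow> ('a \<Rightarrow> int)" where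
  "shiftM p I D M = (\<lambda>x. if x \<in> I then (M x + D x) mod int p else 0)"

lemma shiftM_boxs: "p > 0 \<Longrightarrow> shiftM p I D M \<in> boxs p I"
  unfolding shiftM_def boxs_def by auto

lemma shiftM_inj: "inj_on (shiftM p I D) (boxs p I)"
proof (rule inj_onI)
  fix M M' assume M: "M \<in> boxs p I" and M': "M' \<in> boxs p I" and e: "shiftM p I D M = shiftM p I D M'"
  show "M = M'"
  proof (rule ext)
    fix x
    show "M x = M' x"
    proof (cases "x \<in> I")
      case True
      have "(M x + D x) mod int p = (M' x + D x) mod int p"
        using e True unfolding shiftM_def by (metis (no_types, lifting))
      then have "((M x + D x) mod int p - D x) mod int p = ((M' x + D x) mod int p - D x) mod int p" by simp
      then have "M x mod int p = M' x mod int p" by (simp add: mod_diff_left_eq)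
      moreover have "M x mod int p = M x" "M' x mod int p = M' x" using M M' True unfolding boxs_def by auto
      ultimately show ?thesis by simp
    next
      case False then show ?thesis using M M' unfolding boxs_def by auto
    qed
  qed
qed

lemma modfix:
  fixes m A B y c a0 :: int
  assumes "A mod m = a0" "(B * y) mod m = 1"
  shows "(A + B * (y * c)) mod m = (a0 + c) mod m"
proof -
  have "(B * (y * c)) mod m = (((B * y) mod m) * c) mod m"
    by (simp add: mod_mult_left_eq mult.assoc)
  also have "\<dots> = c mod m" using assms(2) by simp
  finally have 1: "(B * (y * c)) mod m = c mod m" .
  have "(A + B * (y * c)) mod m = (A mod m + (B * (y * c)) mod m) mod m" by (simp add: mod_add_eq)
  also have "\<dots> = (a0 + c mod m) mod m" using assms(1) 1 by simp
  also have "\<dots> = (a0 + c) mod m" by (simp add: mod_add_right_eq)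
  finally show ?thesis .
qed

lemma boxs_mod: "h \<in> boxs p I \<Longrightarrow> h i mod int p = h i"
  unfolding boxs_def by (cases "i \<in> I") auto

lemma pair_bound:
  assumes pr: "prime p" and z: "z \<in> Fvec p n" and j0: "j0 < d" and zj0: "z j0 \<noteq> 0" and dn: "d \<le> n"
  shows "p ^ (n - d) * card {M \<in> boxs p ({d..<n} \<times> {..<d}). \<forall>i\<in>{d..<n}. (\<Sum>j<d. M (i,j) * z j) mod int p = z i}
         \<le> card (boxs p ({d..<n} \<times> {..<d}))"
proof -
  have p0: "p > 0" using prime_gt_0_nat[OF pr] .
  let ?I = "{d..<n} \<times> {..<d}"
  let ?G = "boxs p ?I"
  let ?H = "boxs p {d..<n}"
  let ?L = "\<lambda>M. \<lambda>i. if i \<in> {d..<n} then (\<Sum>j<d. M (i,j) * z j) mod int p else 0"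
  let ?h0 = "\<lambda>i. if i \<in> {d..<n} then z i else 0"
  have fib: "{M \<in> ?G. ?L M = ?h0} = {M \<in> ?G. \<forall>i\<in>{d..<n}. (\<Sum>j<d. M (i,j) * z j) mod int p = z i}"
    by (auto simp: fun_eq_iff)
  have h0H: "?h0 \<in> ?H" using z dn unfolding boxs_def Fvec_def by auto
  have zz: "0 \<le> z j0" "z j0 < int p" using z j0 dn unfolding Fvec_def by auto
  have zpos: "0 < z j0" "z j0 < int p" using zz zj0 by auto
  obtain y where y: "(z j0 * y) mod int p = 1" using mod_inv_exists[OF pr zpos] by blast
  have "card ?H * card {M \<in> ?G. ?L M = ?h0} \<le> card ?G"
  proof (rule fiber_count)
    show "finite ?G" by (intro finite_boxs p0) auto
    show "finite ?H" by (intro finite_boxs p0) auto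
    show "?h0 \<in> ?H" by (rule h0H)
    fix h assume hH: "h \<in> ?H"
    define D where "D = (\<lambda>(i::nat, j::nat). if j = j0 then y * (h i - ?h0 i) else 0)"
    have "inj_on (shiftM p ?I D) {M \<in> ?G. ?L M = ?h0}"
      using shiftM_inj by (rule inj_on_subset) auto
    moreover have "shiftM p ?I D ` {M \<in> ?G. ?L M = ?h0} \<subseteq> {M \<in> ?G. ?L M = h}"
    proof
      fix M' assume "M' \<in> shiftM p ?I D ` {M \<in> ?G. ?L M = ?h0}"
      then obtain M where M: "M \<in> ?G" "?L M = ?h0" and M': "M' = shiftM p ?I D M" by blast
      have "?L M' = h"
      proof (rule ext)
        fix i
        show "?L M' i = h i"
        proof (cases "i \<in> {d..<n}")
          case True
          have A: "(\<Sum>j<d. M (i,j) * z j) mod int p = z i" using fun_cong[OF M(2), of i] True by simp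
          have "(\<Sum>j<d. M' (i,j) * z j) mod int p = (\<Sum>j<d. (M (i,j) + D (i,j)) * z j) mod int p"
          proof -
            have "(\<Sum>j<d. M' (i,j) * z j) = (\<Sum>j<d. ((M (i,j) + D (i,j)) mod int p) * z j)"
              by (rule sum.cong) (use True in \<open>auto simp: M' shiftM_def\<close>)
            then show ?thesis by (simp add: sum_mod_inner')
          qed
          also have "(\<Sum>j<d. (M (i,j) + D (i,j)) * z j) = (\<Sum>j<d. M (i,j) * z j) + (\<Sum>j<d. D (i,j) * z j)"
            by (simp add: sum.distrib distrib_right)
          also have "(\<Sum>j<d. D (i,j) * z j) = (\<Sum>j<d. if j = j0 then y * (h i - z i) * z j0 else 0)"
            by (rule sum.cong) (use True in \<open>auto simp: D_def\<close>)
          also have "\<dots> = z j0 * (y * (h i - z i))" using j0 by simp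
          also have "((\<Sum>j<d. M (i,j) * z j) + z j0 * (y * (h i - z i))) mod int p = (z i + (h i - z i)) mod int p"
            by (rule modfix[OF A y])
          also have "\<dots> = h i" using boxs_mod[OF hH] by simp
          finally show ?thesis using True by simp
        next
          case False
          then show ?thesis using hH unfolding boxs_def by auto
        qed
      qed
      moreover have "M' \<in> ?G" unfolding M' by (rule shiftM_boxs[OF p0])
      ultimately show "M' \<in> {M \<in> ?G. ?L M = h}" by blast
    qed
    ultimately show "\<exists>\<phi>. inj_on \<phi> {M \<in> ?G. ?L M = ?h0} \<and> \<phi> ` {M \<in> ?G. ?L M = ?h0} \<subseteq> {M \<in> ?G. ?L M = h}"
      by blast
  qed
  moreover have "card ?H = p ^ (n - d)" by (simp add: card_boxs)
  ultimately show ?thesis using fib by simp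
qed

lemma perp_bound:
  assumes pr: "prime p" and b: "b \<in> Fvec p n" and i0: "i0 \<in> {d..<n}" and bi0: "b i0 \<noteq> 0"
  shows "p ^ d * card {M \<in> boxs p ({d..<n} \<times> {..<d}). \<forall>j<d. (b j + (\<Sum>i\<in>{d..<n}. b i * M (i,j))) mod int p = 0}
         \<le> card (boxs p ({d..<n} \<times> {..<d}))"
proof -
  have p0: "p > 0" using prime_gt_0_nat[OF pr] .
  let ?I = "{d..<n} \<times> {..<d}"
  let ?G = "boxs p ?I"
  let ?H = "boxs p {..<d}"
  let ?L = "\<lambda>M. \<lambda>j. if j < d then (b j + (\<Sum>i\<in>{d..<n}. b i * M (i,j))) mod int p else 0"
  let ?h0 = "\<lambda>j::nat. 0::int"
  have fib: "{M \<in> ?G. ?L M = ?h0} = {M \<in> ?G. \<forall>j<d. (b j + (\<Sum>i\<in>{d..<n}. b i * M (i,j))) mod int p = 0}"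
    by (auto simp: fun_eq_iff)
  have h0H: "?h0 \<in> ?H" using p0 unfolding boxs_def by auto
  have bb: "0 \<le> b i0" "b i0 < int p" using b i0 unfolding Fvec_def by auto
  have bpos: "0 < b i0" "b i0 < int p" using bb bi0 by auto
  obtain y where y: "(b i0 * y) mod int p = 1" using mod_inv_exists[OF pr bpos] by blast
  have "card ?H * card {M \<in> ?G. ?L M = ?h0} \<le> card ?G"
  proof (rule fiber_count)
    show "finite ?G" by (intro finite_boxs p0) auto
    show "finite ?H" by (intro finite_boxs p0) auto
    show "?h0 \<in> ?H" by (rule h0H)
    fix h assume hH: "h \<in> ?H"
    define D where "D = (\<lambda>(i::nat, j::nat). if i = i0 then y * h j else 0)"
    have "inj_on (shiftM p ?I D) {M \<in> ?G. ?L M = ?h0}"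
      using shiftM_inj by (rule inj_on_subset) auto
    moreover have "shiftM p ?I D ` {M \<in> ?G. ?L M = ?h0} \<subseteq> {M \<in> ?G. ?L M = h}"
    proof
      fix M' assume "M' \<in> shiftM p ?I D ` {M \<in> ?G. ?L M = ?h0}"
      then obtain M where M: "M \<in> ?G" "?L M = ?h0" and M': "M' = shiftM p ?I D M" by blast
      have "?L M' = h"
      proof (rule ext)
        fix j
        show "?L M' j = h j"
        proof (cases "j < d")
          case True
          have A: "(b j + (\<Sum>i\<in>{d..<n}. b i * M (i,j))) mod int p = 0" using fun_cong[OF M(2), of j] True by simp
          have "(b j + (\<Sum>i\<in>{d..<n}. b i * M' (i,j))) mod int p
              = (b j + (\<Sum>i\<in>{d..<n}. b i * (M (i,j) + D (i,j)))) mod int p"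
          proof -
            have "(\<Sum>i\<in>{d..<n}. b i * M' (i,j)) = (\<Sum>i\<in>{d..<n}. b i * ((M (i,j) + D (i,j)) mod int p))"
              by (rule sum.cong) (use True in \<open>auto simp: M' shiftM_def\<close>)
            then have "(\<Sum>i\<in>{d..<n}. b i * M' (i,j)) mod int p = (\<Sum>i\<in>{d..<n}. b i * (M (i,j) + D (i,j))) mod int p"
              by (simp add: sum_mod_inner)
            then have "(b j + (\<Sum>i\<in>{d..<n}. b i * M' (i,j)) mod int p) mod int p
                = (b j + (\<Sum>i\<in>{d..<n}. b i * (M (i,j) + D (i,j))) mod int p) mod int p" by simp
            then show ?thesis by (simp add: mod_add_right_eq)
          qed
          also have "(\<Sum>i\<in>{d..<n}. b i * (M (i,j) + D (i,j))) = (\<Sum>i\<in>{d..<n}. b i * M (i,j)) + (\<Sum>i\<in>{d..<n}. b i * D (i,j))"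
            by (simp add: sum.distrib distrib_left)
          also have "(\<Sum>i\<in>{d..<n}. b i * D (i,j)) = (\<Sum>i\<in>{d..<n}. if i = i0 then b i0 * (y * h j) else 0)"
            by (rule sum.cong) (auto simp: D_def)
          also have "\<dots> = b i0 * (y * h j)" using i0 by simp
          also have "(b j + ((\<Sum>i\<in>{d..<n}. b i * M (i,j)) + b i0 * (y * h j))) mod int p = (0 + h j) mod int p"
            using modfix[OF A y, of "h j"] by (simp only: add.assoc)
          also have "\<dots> = h j" using boxs_mod[OF hH] by simp
          finally show ?thesis using True by simp
        next
          case False
          then show ?thesis using hH unfolding boxs_def by auto
        qed
      qed
      moreover have "M' \<in> ?G" unfolding M' by (rule shiftM_boxs[OF p0])
      ultimately show "M' \<in> {M \<in> ?G. ?L M = h}" by blast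
    qed
    ultimately show "\<exists>\<phi>. inj_on \<phi> {M \<in> ?G. ?L M = ?h0} \<and> \<phi> ` {M \<in> ?G. ?L M = ?h0} \<subseteq> {M \<in> ?G. ?L M = h}"
      by blast
  qed
  moreover have "card ?H = p ^ d" by (simp add: card_boxs)
  ultimately show ?thesis using fib by simp
qed



definition Phi :: "nat \<Rightarrow> nat \<Rightarrow> ((nat \<Rightarrow> int) \<Rightarrow> real) \<Rightarrow> (nat \<Rightarrow> int) \<Rightarrow> real" where
  "Phi p n g z = (\<Sum>x\<in>Fvec p n. g x * g (vadd p x z))"

lemma finite_Fvec: "p > 0 \<Longrightarrow> finite (Fvec p n)"
  by (simp add: Fvec_boxs finite_boxs)

lemma card_Fvec: "card (Fvec p n) = p ^ n"
  by (simp add: Fvec_boxs card_boxs)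

lemma S_eq:
  assumes "W \<subseteq> Fvec p n"
  shows "(\<Sum>m\<in>translate p t W. g m) = (\<Sum>w\<in>W. g (vadd p t w))"
  unfolding translate_def using sum.reindex[OF inj_vadd[OF assms, of t], of g] by simp

lemma sumS:
  assumes p: "p > 0" and W: "W \<subseteq> Fvec p n" "finite W"
  shows "(\<Sum>t\<in>Fvec p n. \<Sum>m\<in>translate p t W. g m) = real (card W) * (\<Sum>x\<in>Fvec p n. g x)"
proof -
  have "(\<Sum>t\<in>Fvec p n. \<Sum>m\<in>translate p t W. g m) = (\<Sum>t\<in>Fvec p n. \<Sum>w\<in>W. g (vadd p t w))"
    by (rule sum.cong[OF refl], rule S_eq[OF W(1)])
  also have "\<dots> = (\<Sum>w\<in>W. \<Sum>t\<in>Fvec p n. g (vadd p t w))" by (rule sum.swap)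
  also have "\<dots> = (\<Sum>w\<in>W. \<Sum>x\<in>Fvec p n. g x)"
    by (rule sum.cong[OF refl]) (use W p in \<open>auto intro: sum_vadd_reindex\<close>)
  finally show ?thesis by simp
qed

lemma sumS2:
  assumes p: "p > 0" and W: "W \<subseteq> Fvec p n" "finite W"
    and cl: "\<And>u v. u \<in> W \<Longrightarrow> v \<in> W \<Longrightarrow> vadd p u v \<in> W" "\<And>u v. u \<in> W \<Longrightarrow> v \<in> W \<Longrightarrow> vsub p u v \<in> W"
  shows "(\<Sum>t\<in>Fvec p n. (\<Sum>m\<in>translate p t W. g m)^2) = real (card W) * (\<Sum>z\<in>W. Phi p n g z)"
proof -
  have "(\<Sum>t\<in>Fvec p n. (\<Sum>m\<in>translate p t W. g m)^2)
      = (\<Sum>t\<in>Fvec p n. \<Sum>w\<in>W. \<Sum>w'\<in>W. g (vadd p t w) * g (vadd p t w'))"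
  proof (rule sum.cong[OF refl])
    fix t
    show "(\<Sum>m\<in>translate p t W. g m)^2 = (\<Sum>w\<in>W. \<Sum>w'\<in>W. g (vadd p t w) * g (vadd p t w'))"
      unfolding S_eq[OF W(1), where t=t and g=g] by (simp add: power2_eq_square sum_product)
  qed
  also have "\<dots> = (\<Sum>w\<in>W. \<Sum>t\<in>Fvec p n. \<Sum>w'\<in>W. g (vadd p t w) * g (vadd p t w'))" by (rule sum.swap)
  also have "\<dots> = (\<Sum>w\<in>W. \<Sum>w'\<in>W. \<Sum>t\<in>Fvec p n. g (vadd p t w) * g (vadd p t w'))"
    by (rule sum.cong[OF refl]) (rule sum.swap)
  also have "\<dots> = (\<Sum>w\<in>W. \<Sum>z\<in>W. Phi p n g z)"
  proof (rule sum.cong[OF refl])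
    fix w assume w: "w \<in> W"
    have wF: "w \<in> Fvec p n" using w W by blast
    have "(\<Sum>w'\<in>W. \<Sum>t\<in>Fvec p n. g (vadd p t w) * g (vadd p t w')) = (\<Sum>w'\<in>W. Phi p n g (vsub p w' w))"
    proof (rule sum.cong[OF refl])
      fix w' assume w': "w' \<in> W"
      have "(\<Sum>t\<in>Fvec p n. g (vadd p t w) * g (vadd p t w'))
          = (\<Sum>t\<in>Fvec p n. (\<lambda>x. g x * g (vadd p x (vsub p w' w))) (vadd p t w))"
        by (simp add: vadd_shift)
      also have "\<dots> = (\<Sum>x\<in>Fvec p n. g x * g (vadd p x (vsub p w' w)))"
        by (rule sum_vadd_reindex[OF p wF])
      finally show "(\<Sum>t\<in>Fvec p n. g (vadd p t w) * g (vadd p t w')) = Phi p n g (vsub p w' w)"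
        unfolding Phi_def .
    qed
    also have "\<dots> = (\<Sum>z\<in>W. Phi p n g z)"
    proof -
      have "bij_betw (\<lambda>w'. vsub p w' w) W W"
      proof (rule bij_betw_byWitness[where f'="\<lambda>z. vadd p z w"])
        show "\<forall>a\<in>W. vadd p (vsub p a w) w = a" using W by (auto intro: vadd_vsub_cancel)
        show "\<forall>a'\<in>W. vsub p (vadd p a' w) w = a'" using W by (auto intro: vsub_vadd_cancel)
        show "(\<lambda>w'. vsub p w' w) ` W \<subseteq> W" using cl(2) w by blast
        show "(\<lambda>z. vadd p z w) ` W \<subseteq> W" using cl(1) w by blast
      qed
      then show ?thesis by (rule sum.reindex_bij_betw)
    qed
    finally show "(\<Sum>w'\<in>W. \<Sum>t\<in>Fvec p n. g (vadd p t w) * g (vadd p t w')) = (\<Sum>z\<in>W. Phi p n g z)" .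
  qed
  finally show ?thesis by simp
qed

lemma var_eq:
  fixes g :: "(nat \<Rightarrow> int) \<Rightarrow> real"
  assumes p: "p > 0" and W: "W \<subseteq> Fvec p n" "finite W"
    and cl: "\<And>u v. u \<in> W \<Longrightarrow> v \<in> W \<Longrightarrow> vadd p u v \<in> W" "\<And>u v. u \<in> W \<Longrightarrow> v \<in> W \<Longrightarrow> vsub p u v \<in> W"
  defines "T \<equiv> (\<Sum>x\<in>Fvec p n. g x)" and "N \<equiv> real (p ^ n)" and "q \<equiv> real (card W)"
  shows "(\<Sum>t\<in>Fvec p n. ((\<Sum>m\<in>translate p t W. g m) - T * q / N)^2) = q * (\<Sum>z\<in>W. Phi p n g z) - q^2 * T^2 / N"
proof -
  let ?S = "\<lambda>t. (\<Sum>m\<in>translate p t W. g m)"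
  have N0: "N > 0" unfolding N_def using p by simp
  have cV: "real (card (Fvec p n)) = N" unfolding N_def by (simp add: card_Fvec)
  have "(\<Sum>t\<in>Fvec p n. (?S t - T * q / N)^2) = (\<Sum>t\<in>Fvec p n. (?S t)^2 - 2 * (T * q / N) * ?S t + (T * q / N)^2)"
    by (rule sum.cong[OF refl]) (simp add: power2_diff)
  also have "\<dots> = (\<Sum>t\<in>Fvec p n. (?S t)^2) - 2 * (T * q / N) * (\<Sum>t\<in>Fvec p n. ?S t) + N * (T * q / N)^2"
    by (simp add: sum.distrib sum_subtractf sum_distrib_left cV)
  also have "\<dots> = q * (\<Sum>z\<in>W. Phi p n g z) - 2 * (T * q / N) * (q * T) + N * (T * q / N)^2"
    using sumS2[OF p W cl] sumS[OF p W] unfolding q_def T_def by simp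
  also have "\<dots> = q * (\<Sum>z\<in>W. Phi p n g z) - q^2 * T^2 / N"
    using N0 by (simp add: field_simps power2_eq_square)
  finally show ?thesis .
qed

lemma Phi_nonneg:
  assumes "\<forall>m\<in>Fvec p n. 0 \<le> g m \<and> g m \<le> 1" "p > 0" "z \<in> Fvec p n"
  shows "0 \<le> Phi p n g z"
  unfolding Phi_def using assms by (auto intro!: sum_nonneg mult_nonneg_nonneg vadd_Fvec)

lemma Phi_zero:
  assumes "\<forall>m\<in>Fvec p n. 0 \<le> g m \<and> g m \<le> 1"
  shows "Phi p n g vzero \<le> (\<Sum>x\<in>Fvec p n. g x)"
  unfolding Phi_def
proof (rule sum_mono)
  fix x assume x: "x \<in> Fvec p n"
  have "g x * g (vadd p x vzero) = g x * g x" using vadd_vzero[OF x] by simp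
  also have "\<dots> \<le> g x * 1" using assms x by (intro mult_left_mono) auto
  finally show "g x * g (vadd p x vzero) \<le> g x" by simp
qed

lemma Phi_total:
  assumes p: "p > 0"
  shows "(\<Sum>z\<in>Fvec p n. Phi p n g z) = (\<Sum>x\<in>Fvec p n. g x)^2"
proof -
  have "(\<Sum>z\<in>Fvec p n. Phi p n g z) = (\<Sum>x\<in>Fvec p n. \<Sum>z\<in>Fvec p n. g x * g (vadd p x z))"
    unfolding Phi_def by (rule sum.swap)
  also have "\<dots> = (\<Sum>x\<in>Fvec p n. g x * (\<Sum>y\<in>Fvec p n. g y))"
  proof (rule sum.cong[OF refl])
    fix x assume x: "x \<in> Fvec p n"
    have "(\<Sum>z\<in>Fvec p n. g (vadd p x z)) = (\<Sum>z\<in>Fvec p n. g (vadd p z x))" by (simp add: vadd_comm)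
    also have "\<dots> = (\<Sum>y\<in>Fvec p n. g y)" by (rule sum_vadd_reindex[OF p x])
    finally show "(\<Sum>z\<in>Fvec p n. g x * g (vadd p x z)) = g x * (\<Sum>y\<in>Fvec p n. g y)"
      by (simp add: sum_distrib_left[symmetric])
  qed
  also have "\<dots> = (\<Sum>x\<in>Fvec p n. g x)^2" by (simp add: sum_distrib_right[symmetric] power2_eq_square)
  finally show ?thesis .
qed



abbreviation Ms :: "nat \<Rightarrow> nat \<Rightarrow> nat \<Rightarrow> (nat \<times> nat \<Rightarrow> int) set" where
  "Ms p n d \<equiv> boxs p ({d..<n} \<times> {..<d})"

lemma finite_Ms: "p > 0 \<Longrightarrow> finite (Ms p n d)"
  by (intro finite_boxs) auto

lemma card_Ms_pos: "p > 0 \<Longrightarrow> card (Ms p n d) > 0"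
  by (simp add: card_boxs)

lemma pair_count:
  assumes pr: "prime p" and dn: "d \<le> n" and z: "z \<in> Fvec p n" and nz: "z \<noteq> vzero"
  shows "real (card {M \<in> Ms p n d. z \<in> gW p n d M}) \<le> real (card (Ms p n d)) * real (p ^ d) / real (p ^ n)"
proof (cases "{M \<in> Ms p n d. z \<in> gW p n d M} = {}")
  case True
  have "real (card {M \<in> Ms p n d. z \<in> gW p n d M}) = 0" by (simp only: True card.empty of_nat_0)
  then show ?thesis by simp
next
  case False
  have p0: "p > 0" using prime_gt_0_nat[OF pr] .
  then obtain M0 where "z \<in> gW p n d M0" using False by blast
  then obtain j0 where j0: "j0 < d" "z j0 \<noteq> 0" using gW_nonzero nz by blast
  let ?F = "{M \<in> Ms p n d. \<forall>i\<in>{d..<n}. (\<Sum>j<d. M (i,j) * z j) mod int p = z i}"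
  have sub: "{M \<in> Ms p n d. z \<in> gW p n d M} \<subseteq> ?F"
  proof
    fix M assume "M \<in> {M \<in> Ms p n d. z \<in> gW p n d M}"
    then have M: "M \<in> Ms p n d" and zW: "z \<in> gW p n d M" by auto
    have zz: "\<forall>i\<in>{d..<n}. z i = (\<Sum>j<d. M (i,j) * z j) mod int p" using zW unfolding gW_def by blast
    have "\<forall>i\<in>{d..<n}. (\<Sum>j<d. M (i,j) * z j) mod int p = z i"
    proof
      fix i assume i: "i \<in> {d..<n}"
      show "(\<Sum>j<d. M (i,j) * z j) mod int p = z i" using zz[rule_format, OF i] by (rule sym)
    qed
    then show "M \<in> ?F" using M by blast
  qed
  have c1: "card {M \<in> Ms p n d. z \<in> gW p n d M} \<le> card ?F"
    by (rule card_mono[OF _ sub]) (use finite_Ms[OF p0] in auto)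
  have c2: "p ^ (n - d) * card ?F \<le> card (Ms p n d)"
    by (rule pair_bound[OF pr z j0 dn])
  have "p ^ (n - d) * card {M \<in> Ms p n d. z \<in> gW p n d M} \<le> card (Ms p n d)"
    by (rule order_trans[OF mult_le_mono2[OF c1] c2])
  then have 1: "real (p ^ (n - d)) * real (card {M \<in> Ms p n d. z \<in> gW p n d M}) \<le> real (card (Ms p n d))"
    by (simp only: of_nat_mult[symmetric] of_nat_le_iff)
  have pn: "real (p ^ n) = real (p ^ d) * real (p ^ (n - d))"
    using dn by (simp add: power_add[symmetric])
  have pos: "real (p ^ (n - d)) > 0" using p0 by simp
  have "real (card {M \<in> Ms p n d. z \<in> gW p n d M}) \<le> real (card (Ms p n d)) / real (p ^ (n - d))"
    using 1 pos by (simp add: field_simps)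
  also have "\<dots> = real (card (Ms p n d)) * real (p ^ d) / real (p ^ n)"
    unfolding pn using p0 by (simp add: field_simps)
  finally show ?thesis .
qed

lemma sum_Phi_bound:
  fixes g :: "(nat \<Rightarrow> int) \<Rightarrow> real"
  assumes pr: "prime p" and dn: "d \<le> n" and g: "\<forall>m\<in>Fvec p n. 0 \<le> g m \<and> g m \<le> 1"
  defines "T \<equiv> (\<Sum>x\<in>Fvec p n. g x)"
  shows "(\<Sum>M\<in>Ms p n d. \<Sum>z\<in>gW p n d M. Phi p n g z)
      \<le> real (card (Ms p n d)) * T + real (card (Ms p n d)) * real (p ^ d) / real (p ^ n) * T^2"
proof -
  have p0: "p > 0" using prime_gt_0_nat[OF pr] .
  let ?V = "Fvec p n"
  let ?c = "\<lambda>z. real (card {M \<in> Ms p n d. z \<in> gW p n d M})"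
  let ?K = "real (card (Ms p n d)) * real (p ^ d) / real (p ^ n)"
  have fV: "finite ?V" using finite_Fvec[OF p0] .
  have fM: "finite (Ms p n d)" using finite_Ms[OF p0] .
  have "(\<Sum>M\<in>Ms p n d. \<Sum>z\<in>gW p n d M. Phi p n g z) = (\<Sum>M\<in>Ms p n d. \<Sum>z\<in>?V. if z \<in> gW p n d M then Phi p n g z else 0)"
  proof (rule sum.cong[OF refl])
    fix M
    have "(\<Sum>z\<in>?V. if z \<in> gW p n d M then Phi p n g z else 0) = (\<Sum>z\<in>?V \<inter> gW p n d M. Phi p n g z)"
      by (rule sum.inter_restrict[OF fV, symmetric])
    also have "?V \<inter> gW p n d M = gW p n d M" using gW_sub by blast
    finally show "(\<Sum>z\<in>gW p n d M. Phi p n g z) = (\<Sum>z\<in>?V. if z \<in> gW p n d M then Phi p n g z else 0)" by simp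
  qed
  also have "\<dots> = (\<Sum>z\<in>?V. \<Sum>M\<in>Ms p n d. if z \<in> gW p n d M then Phi p n g z else 0)" by (rule sum.swap)
  also have "\<dots> = (\<Sum>z\<in>?V. Phi p n g z * ?c z)"
  proof (rule sum.cong[OF refl])
    fix z
    have "(\<Sum>M\<in>Ms p n d. if z \<in> gW p n d M then Phi p n g z else 0) = (\<Sum>M\<in>{M \<in> Ms p n d. z \<in> gW p n d M}. Phi p n g z)"
      by (rule sum.inter_filter[OF fM, symmetric])
    then show "(\<Sum>M\<in>Ms p n d. if z \<in> gW p n d M then Phi p n g z else 0) = Phi p n g z * ?c z" by simp
  qed
  also have "\<dots> = Phi p n g vzero * ?c vzero + (\<Sum>z\<in>?V - {vzero}. Phi p n g z * ?c z)"
    using sum.remove[OF fV vzero_Fvec[OF p0]] by simp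
  also have "\<dots> \<le> T * real (card (Ms p n d)) + (\<Sum>z\<in>?V - {vzero}. Phi p n g z * ?K)"
  proof (rule add_mono)
    have "?c vzero \<le> real (card (Ms p n d))" by (simp add: card_mono[OF fM])
    moreover have "Phi p n g vzero \<le> T" unfolding T_def by (rule Phi_zero[OF g])
    moreover have "0 \<le> Phi p n g vzero" by (rule Phi_nonneg[OF g p0 vzero_Fvec[OF p0]])
    ultimately show "Phi p n g vzero * ?c vzero \<le> T * real (card (Ms p n d))"
      by (intro mult_mono) auto
    show "(\<Sum>z\<in>?V - {vzero}. Phi p n g z * ?c z) \<le> (\<Sum>z\<in>?V - {vzero}. Phi p n g z * ?K)"
    proof (rule sum_mono)
      fix z assume z: "z \<in> ?V - {vzero}"
      show "Phi p n g z * ?c z \<le> Phi p n g z * ?K"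
        using pair_count[OF pr dn, of z] z Phi_nonneg[OF g p0, of z] by (intro mult_left_mono) auto
    qed
  qed
  also have "(\<Sum>z\<in>?V - {vzero}. Phi p n g z * ?K) \<le> (\<Sum>z\<in>?V. Phi p n g z * ?K)"
    by (rule sum_mono2[OF fV]) (use Phi_nonneg[OF g p0] in auto)
  also have "(\<Sum>z\<in>?V. Phi p n g z * ?K) = ?K * T^2"
  proof -
    have "(\<Sum>z\<in>?V. Phi p n g z * ?K) = (\<Sum>z\<in>?V. Phi p n g z) * ?K" by (rule sum_distrib_right[symmetric])
    also have "\<dots> = ?K * T^2" using Phi_total[OF p0, of n g] unfolding T_def by simp
    finally show ?thesis .
  qed
  finally show ?thesis by (simp add: mult.commute)
qed

lemma var_total:
  fixes g :: "(nat \<Rightarrow> int) \<Rightarrow> real"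
  assumes pr: "prime p" and dn: "d \<le> n" and g: "\<forall>m\<in>Fvec p n. 0 \<le> g m \<and> g m \<le> 1"
  defines "T \<equiv> (\<Sum>x\<in>Fvec p n. g x)" and "N \<equiv> real (p ^ n)" and "q \<equiv> real (p ^ d)"
  shows "(\<Sum>M\<in>Ms p n d. \<Sum>t\<in>Fvec p n. ((\<Sum>m\<in>translate p t (gW p n d M). g m) - T * q / N)^2)
      \<le> q * T * real (card (Ms p n d))"
proof -
  have p0: "p > 0" using prime_gt_0_nat[OF pr] .
  have N0: "N > 0" unfolding N_def using p0 by simp
  let ?m = "real (card (Ms p n d))"
  have "(\<Sum>M\<in>Ms p n d. \<Sum>t\<in>Fvec p n. ((\<Sum>m\<in>translate p t (gW p n d M). g m) - T * q / N)^2)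
      = (\<Sum>M\<in>Ms p n d. q * (\<Sum>z\<in>gW p n d M. Phi p n g z) - q^2 * T^2 / N)"
  proof (rule sum.cong[OF refl])
    fix M
    have cW: "real (card (gW p n d M)) = q" unfolding q_def using card_gW[OF p0 dn] by simp
    have fW: "finite (gW p n d M)" using finite_subset[OF gW_sub finite_Fvec[OF p0]] .
    show "(\<Sum>t\<in>Fvec p n. ((\<Sum>m\<in>translate p t (gW p n d M). g m) - T * q / N)^2)
        = q * (\<Sum>z\<in>gW p n d M. Phi p n g z) - q^2 * T^2 / N"
      using var_eq[OF p0 gW_sub fW gW_add[OF p0] gW_vsub[OF p0], of g] unfolding cW T_def N_def by simp
  qed
  also have "\<dots> = q * (\<Sum>M\<in>Ms p n d. \<Sum>z\<in>gW p n d M. Phi p n g z) - ?m * (q^2 * T^2 / N)"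
    by (simp add: sum_subtractf sum_distrib_left)
  also have "\<dots> \<le> q * (?m * T + ?m * q / N * T^2) - ?m * (q^2 * T^2 / N)"
    using sum_Phi_bound[OF pr dn g] unfolding T_def q_def N_def
    by (intro diff_right_mono mult_left_mono) auto
  also have "\<dots> = q * T * ?m" using N0 by (simp add: field_simps power2_eq_square)
  finally show ?thesis .
qed



lemma cheb:
  fixes S :: "'a \<Rightarrow> real"
  assumes fV: "finite V" and c: "c > 0"
  shows "real (card {t\<in>V. S t < c / 2}) * (c / 2)^2 \<le> (\<Sum>t\<in>V. (S t - c)^2)"
proof -
  have "real (card {t\<in>V. S t < c / 2}) * (c / 2)^2 = (\<Sum>t\<in>{t\<in>V. S t < c / 2}. (c / 2)^2)" by simp
  also have "\<dots> \<le> (\<Sum>t\<in>{t\<in>V. S t < c / 2}. (S t - c)^2)"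
  proof (rule sum_mono)
    fix t assume "t \<in> {t\<in>V. S t < c / 2}"
    then have "S t < c / 2" by simp
    then have "c / 2 \<le> c - S t" "0 \<le> c / 2" using c by auto
    then have "(c / 2)^2 \<le> (c - S t)^2" by (rule power_mono)
    then show "(c / 2)^2 \<le> (S t - c)^2" by (simp add: power2_commute)
  qed
  also have "\<dots> \<le> (\<Sum>t\<in>V. (S t - c)^2)"
    by (rule sum_mono2[OF fV]) auto
  finally show ?thesis .
qed

lemma vsub_zero_swap: "vsub p b a = vzero \<longleftrightarrow> vsub p a b = vzero"
proof -
  have "\<And>i. (b i - a i) mod int p = 0 \<longleftrightarrow> (a i - b i) mod int p = 0"
    by (simp add: dvd_eq_mod_eq_0[symmetric] dvd_diff_commute)
  then show ?thesis unfolding vsub_def vzero_def fun_eq_iff by simp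
qed

lemma perp_swap:
  assumes p0: "p > 0" and a: "a \<in> Fvec p n" and b: "b \<in> Fvec p n"
  shows "vsub p b a \<in> perp p n W \<longleftrightarrow> vsub p a b \<in> perp p n W"
  unfolding perp_def using vsub_Fvec[OF p0 a b] vsub_Fvec[OF p0 b a] dotp_vsub_swap[of p n b a] by auto

lemma perp_count:
  assumes pr: "prime p" and dn: "d \<le> n" and b: "b \<in> Fvec p n"
  shows "real (card {M \<in> Ms p n d. b \<noteq> vzero \<and> b \<in> perp p n (gW p n d M)}) \<le> real (card (Ms p n d)) / real (p ^ d)"
proof (cases "{M \<in> Ms p n d. b \<noteq> vzero \<and> b \<in> perp p n (gW p n d M)} = {}")
  case True
  have "real (card {M \<in> Ms p n d. b \<noteq> vzero \<and> b \<in> perp p n (gW p n d M)}) = 0"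
    by (simp only: True card.empty of_nat_0)
  then show ?thesis by simp
next
  case False
  have p0: "p > 0" using prime_gt_0_nat[OF pr] .
  have p1: "p > 1" using prime_gt_1_nat[OF pr] .
  obtain M0 where "b \<noteq> vzero" "b \<in> perp p n (gW p n d M0)" using False by blast
  then obtain i0 where i0: "i0 \<in> {d..<n}" "b i0 \<noteq> 0" using perp_gW_nonzero[OF p1 dn b] by blast
  let ?F = "{M \<in> Ms p n d. \<forall>j<d. (b j + (\<Sum>i\<in>{d..<n}. b i * M (i,j))) mod int p = 0}"
  have sub: "{M \<in> Ms p n d. b \<noteq> vzero \<and> b \<in> perp p n (gW p n d M)} \<subseteq> ?F"
  proof
    fix M assume "M \<in> {M \<in> Ms p n d. b \<noteq> vzero \<and> b \<in> perp p n (gW p n d M)}"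
    then have M: "M \<in> Ms p n d" and bp: "b \<in> perp p n (gW p n d M)" by auto
    have "\<forall>j<d. (b j + (\<Sum>i\<in>{d..<n}. b i * M (i,j))) mod int p = 0"
      using perp_gW_cond[OF p1 dn b bp] by blast
    then show "M \<in> ?F" using M by blast
  qed
  have c1: "card {M \<in> Ms p n d. b \<noteq> vzero \<and> b \<in> perp p n (gW p n d M)} \<le> card ?F"
    by (rule card_mono[OF _ sub]) (use finite_Ms[OF p0] in auto)
  have c2: "p ^ d * card ?F \<le> card (Ms p n d)"
    by (rule perp_bound[OF pr b i0])
  have "p ^ d * card {M \<in> Ms p n d. b \<noteq> vzero \<and> b \<in> perp p n (gW p n d M)} \<le> card (Ms p n d)"
    by (rule order_trans[OF mult_le_mono2[OF c1] c2])
  then have 1: "real (p ^ d) * real (card {M \<in> Ms p n d. b \<noteq> vzero \<and> b \<in> perp p n (gW p n d M)}) \<le> real (card (Ms p n d))"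
    by (simp only: of_nat_mult[symmetric] of_nat_le_iff)
  have pos: "real (p ^ d) > 0" using p0 by simp
  show ?thesis using 1 pos by (simp add: field_simps)
qed

lemma fail_count:
  assumes pr: "prime p" and dn: "d \<le> n" and A: "A \<subseteq> Fvec p n" "finite A"
  shows "real (card {M \<in> Ms p n d. \<exists>a\<in>A. \<exists>b\<in>A. vsub p a b \<noteq> vzero \<and> vsub p a b \<in> perp p n (gW p n d M)})
     \<le> real (card A choose 2) * real (card (Ms p n d)) / real (p ^ d)"
proof -
  have p0: "p > 0" using prime_gt_0_nat[OF pr] .
  let ?P = "{P. P \<subseteq> A \<and> card P = 2}"
  let ?E = "\<lambda>P. {M \<in> Ms p n d. \<exists>a\<in>P. \<exists>b\<in>P. vsub p a b \<noteq> vzero \<and> vsub p a b \<in> perp p n (gW p n d M)}"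
  have fP: "finite ?P" using A(2) by auto
  have sub: "{M \<in> Ms p n d. \<exists>a\<in>A. \<exists>b\<in>A. vsub p a b \<noteq> vzero \<and> vsub p a b \<in> perp p n (gW p n d M)} \<subseteq> (\<Union>P\<in>?P. ?E P)"
  proof
    fix M assume "M \<in> {M \<in> Ms p n d. \<exists>a\<in>A. \<exists>b\<in>A. vsub p a b \<noteq> vzero \<and> vsub p a b \<in> perp p n (gW p n d M)}"
    then obtain a b where M: "M \<in> Ms p n d" and ab: "a \<in> A" "b \<in> A" "vsub p a b \<noteq> vzero" "vsub p a b \<in> perp p n (gW p n d M)"
      by blast
    have "a \<noteq> b" using ab(3) vsub_self by metis
    then have "{a, b} \<in> ?P" using ab by auto
    moreover have "M \<in> ?E {a, b}" using M ab by blast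
    ultimately show "M \<in> (\<Union>P\<in>?P. ?E P)" by blast
  qed
  have EP: "real (card (?E P)) \<le> real (card (Ms p n d)) / real (p ^ d)" if P: "P \<in> ?P" for P
  proof -
    obtain a b where Pab: "P = {a, b}" and "a \<noteq> b" using P by (auto simp: card_2_iff)
    have aF: "a \<in> Fvec p n" and bF: "b \<in> Fvec p n" using P Pab A(1) by auto
    have "?E P \<subseteq> {M \<in> Ms p n d. vsub p a b \<noteq> vzero \<and> vsub p a b \<in> perp p n (gW p n d M)}"
    proof
      fix M assume "M \<in> ?E P"
      then obtain x y where M: "M \<in> Ms p n d" and xy: "x \<in> P" "y \<in> P" "vsub p x y \<noteq> vzero" "vsub p x y \<in> perp p n (gW p n d M)"
        by blast
      have "x = a \<and> y = b \<or> x = b \<and> y = a"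
        using xy Pab vsub_self by auto
      then show "M \<in> {M \<in> Ms p n d. vsub p a b \<noteq> vzero \<and> vsub p a b \<in> perp p n (gW p n d M)}"
      proof
        assume "x = a \<and> y = b" then show ?thesis using M xy by blast
      next
        assume "x = b \<and> y = a"
        then have "vsub p b a \<noteq> vzero" "vsub p b a \<in> perp p n (gW p n d M)" using xy by auto
        then have "vsub p a b \<noteq> vzero" "vsub p a b \<in> perp p n (gW p n d M)"
          using vsub_zero_swap[of p b a] perp_swap[OF p0 aF bF] by auto
        then show ?thesis using M by blast
      qed
    qed
    then have "card (?E P) \<le> card {M \<in> Ms p n d. vsub p a b \<noteq> vzero \<and> vsub p a b \<in> perp p n (gW p n d M)}"
      by (rule card_mono[rotated]) (use finite_Ms[OF p0] in auto)
    then have "real (card (?E P)) \<le> real (card {M \<in> Ms p n d. vsub p a b \<noteq> vzero \<and> vsub p a b \<in> perp p n (gW p n d M)})"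
      by simp
    also have "\<dots> \<le> real (card (Ms p n d)) / real (p ^ d)"
      by (rule perp_count[OF pr dn vsub_Fvec[OF p0 aF bF]])
    finally show ?thesis .
  qed
  have "card {M \<in> Ms p n d. \<exists>a\<in>A. \<exists>b\<in>A. vsub p a b \<noteq> vzero \<and> vsub p a b \<in> perp p n (gW p n d M)} \<le> card (\<Union>P\<in>?P. ?E P)"
    by (rule card_mono[OF _ sub]) (use fP finite_Ms[OF p0] in auto)
  also have "\<dots> \<le> (\<Sum>P\<in>?P. card (?E P))" by (rule card_UN_le[OF fP])
  finally have "real (card {M \<in> Ms p n d. \<exists>a\<in>A. \<exists>b\<in>A. vsub p a b \<noteq> vzero \<and> vsub p a b \<in> perp p n (gW p n d M)})
      \<le> (\<Sum>P\<in>?P. real (card (?E P)))" by (simp only: of_nat_le_iff of_nat_sum[symmetric])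
  also have "\<dots> \<le> (\<Sum>P\<in>?P. real (card (Ms p n d)) / real (p ^ d))" by (rule sum_mono) (rule EP)
  also have "\<dots> = real (card ?P) * (real (card (Ms p n d)) / real (p ^ d))" by simp
  also have "card ?P = card A choose 2" by (rule n_subsets[OF A(2)])
  finally show ?thesis by simp
qed

lemma log_bound:
  fixes p C n' :: nat
  assumes p: "p \<ge> 2" and C: "C \<ge> 1" and h: "1 + ln (real C) / ln (real p) \<le> real n'"
  shows "real p * real C \<le> real (p ^ n')"
proof -
  have lp: "ln (real p) > 0" using p by simp
  have lC: "ln (real C) \<ge> 0" using C by simp
  have "ln (real C) / ln (real p) \<ge> 0" using lp lC by simp
  then have n1: "n' \<ge> 1" using h by linarith
  have "ln (real C) / ln (real p) \<le> real (n' - 1)" using h n1 by (simp add: of_nat_diff)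
  then have "ln (real C) \<le> real (n' - 1) * ln (real p)" using lp by (simp add: divide_le_eq)
  also have "\<dots> = ln (real p ^ (n' - 1))" using p by (simp add: ln_realpow)
  finally have "real C \<le> real p ^ (n' - 1)" using C p by (subst (asm) ln_le_cancel_iff) auto
  then have "real p * real C \<le> real p * real p ^ (n' - 1)" using p by simp
  also have "\<dots> = real p ^ n'" using n1 by (simp add: power_eq_if)
  finally show ?thesis by simp
qed

lemma final_ineq:
  fixes p k C q \<mu> :: real
  assumes p: "p \<ge> 2" and k: "k \<ge> 2" and C: "C = k * (k - 1) / 2" and q: "q \<ge> p * C"
    and mu: "8 / (sqrt p * k) < \<mu>" "\<mu> \<le> 1"
  shows "C / q + 16 / (3 * q * \<mu>) < 1"
proof -
  define s where "s = sqrt p"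
  have s2: "s * s = p" unfolding s_def using p by simp
  have s1: "s \<ge> 1" unfolding s_def using p by simp
  have sk: "s * k > 0" using s1 k by simp
  have skmu: "s * k * \<mu> > 8" using mu(1) sk unfolding s_def by (simp add: divide_less_eq mult.commute)
  have mu0: "\<mu> > 0" using mu(1) sk unfolding s_def by (smt (verit) divide_pos_pos)
  have sk8: "s * k > 8" using skmu mu(2) sk by (smt (verit) mult_left_le)
  have "k * (k - 1) > 0" using k by (intro mult_pos_pos) auto
  then have C0: "C > 0" using C by simp
  have q0: "q > 0" using q C0 p by (smt (verit) mult_pos_pos)
  have t1: "C / q \<le> 1 / 2"
  proof -
    have "C / q \<le> C / (p * C)" using q q0 C0 p by (intro divide_left_mono) auto
    also have "\<dots> = 1 / p" using C0 by simp
    also have "\<dots> \<le> 1 / 2" using p by simp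
    finally show ?thesis .
  qed
  have "q * \<mu> \<ge> p * C * \<mu>" using q mu0 by (simp add: mult_right_mono)
  also have "p * C * \<mu> = (s * k * \<mu>) * (s * (k - 1) / 2)" unfolding C s2[symmetric] by (simp add: field_simps)
  finally have qm: "q * \<mu> \<ge> (s * k * \<mu>) * (s * (k - 1) / 2)" .
  have "s * (k - 1) / 2 \<ge> s * k / 4" using s1 k by (simp add: field_simps)
  then have "s * (k - 1) / 2 > 2" using sk8 by (simp add: mult.commute)
  then have "(s * k * \<mu>) * (s * (k - 1) / 2) > 8 * 2" using skmu by (intro mult_strict_mono) auto
  then have qm16: "q * \<mu> > 16" using qm by simp
  have t2: "16 / (3 * q * \<mu>) < 1 / 3"
    using qm16 by (simp add: divide_less_eq mult.assoc mult.commute)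
  show ?thesis using t1 t2 by linarith
qed



theorem corollary2:
  fixes p n k n' :: nat and f g :: "(nat \<Rightarrow> int) \<Rightarrow> real" and A :: "(nat \<Rightarrow> int) set"
  assumes "prime p" and "n \<ge> 1"
    and "\<forall>m\<in>Fvec p n. 0 \<le> f m \<and> f m \<le> 1"
    and "\<forall>m\<in>Fvec p n. 0 \<le> g m \<and> g m \<le> 1"
    and "2 \<le> k" and "k \<le> p ^ n"
    and "A \<subseteq> Fvec p n" and "card A = k"
    and "\<forall>a\<in>A. \<forall>b\<in>Fvec p n - A. cmod (fourier p n f a) \<ge> cmod (fourier p n f b)"
    and "1 + ln (real (k choose 2)) / ln (real p) \<le> real n'"
    and "real n' < 2 + ln (real (k choose 2)) / ln (real p)"
    and "n' \<le> n"
    and "expect p n g > 8 / (sqrt (real p) * real k)"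
  shows "\<exists>W. subspace_dim p n W n' \<and>
           {vsub p a b | a b. a \<in> A \<and> b \<in> A} \<inter> perp p n W = {vzero} \<and>
           real (card {t \<in> Fvec p n. (\<Sum>m\<in>translate p t W. g m) \<ge> expect p n g * real (card W) / 2})
             \<ge> real (p ^ n) / 4"
proof -
  note pr = assms(1) and g = assms(4) and k2 = assms(5) and AV = assms(7) and cA = assms(8)
    and lg = assms(10) and dn = assms(12) and ex = assms(13)
  have p0: "p > 0" using prime_gt_0_nat[OF pr] .
  have p1: "p > 1" using prime_gt_1_nat[OF pr] .
  have fA: "finite A" using cA k2 card.infinite by fastforce
  let ?V = "Fvec p n"
  let ?Ms = "Ms p n n'"
  define T where "T = (\<Sum>x\<in>?V. g x)"
  define N where "N = real (p ^ n)"
  define q where "q = real (p ^ n')"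
  define m where "m = real (card ?Ms)"
  define \<mu> where "\<mu> = expect p n g"
  define C where "C = real (k choose 2)"
  have fV: "finite ?V" using finite_Fvec[OF p0] .
  have fM: "finite ?Ms" using finite_Ms[OF p0] .
  have N0: "N > 0" unfolding N_def using p0 by simp
  have q0: "q > 0" unfolding q_def using p0 by simp
  have m0: "m > 0" unfolding m_def using card_Ms_pos[OF p0] by simp
  have muTN: "\<mu> = T / N" unfolding \<mu>_def expect_def T_def N_def by simp
  have TN: "T \<le> N"
  proof -
    have "T \<le> (\<Sum>x\<in>?V. 1)" unfolding T_def using g by (intro sum_mono) auto
    also have "\<dots> = N" unfolding N_def by (simp add: card_Fvec)
    finally show ?thesis .
  qed
  have mu1: "\<mu> \<le> 1" using TN N0 muTN by simp
  have kpos: "sqrt (real p) * real k > 0" using p0 k2 by simp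
  have mu0: "\<mu> > 0" using ex kpos unfolding \<mu>_def by (smt (verit) divide_pos_pos)
  have T0: "T > 0" using mu0 muTN N0 by (simp add: zero_less_divide_iff)
  have Cval: "C = real k * (real k - 1) / 2"
  proof -
    have "real (k choose 2) = real (k - 1) * real k / 2"
      by (auto simp add: choose_two field_char_0_class.of_nat_div mod_eq_0_iff_dvd)
    then show ?thesis unfolding C_def using k2 by (simp add: of_nat_diff mult.commute)
  qed
  have "0 < k choose 2" using k2 by (rule zero_less_binomial)
  then have C1: "k choose 2 \<ge> 1" by linarith
  have qC: "q \<ge> real p * C"
    using log_bound[of p "k choose 2" n'] p1 C1 lg unfolding q_def C_def by simp
  have key: "C / q + 16 / (3 * q * \<mu>) < 1"
    by (rule final_ineq[of "real p" "real k"]) (use p1 k2 Cval qC ex mu1 in \<open>auto simp: \<mu>_def\<close>)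
  let ?S = "\<lambda>M t. (\<Sum>m\<in>translate p t (gW p n n' M). g m)"
  define bad where "bad M = {t\<in>?V. ?S M t < T * q / N / 2}" for M
  have cW: "real (card (gW p n n' M)) = q" for M unfolding q_def using card_gW[OF p0 dn] by simp
  have cheb1: "real (card (bad M)) * (T * q / N / 2)^2 \<le> (\<Sum>t\<in>?V. (?S M t - T * q / N)^2)" for M
    unfolding bad_def by (rule cheb[OF fV]) (use T0 q0 N0 in simp)
  have sumbad: "(\<Sum>M\<in>?Ms. real (card (bad M))) * (T * q / N / 2)^2 \<le> q * T * m"
  proof -
    have "(\<Sum>M\<in>?Ms. real (card (bad M))) * (T * q / N / 2)^2 = (\<Sum>M\<in>?Ms. real (card (bad M)) * (T * q / N / 2)^2)"
      by (rule sum_distrib_right)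
    also have "\<dots> \<le> (\<Sum>M\<in>?Ms. \<Sum>t\<in>?V. (?S M t - T * q / N)^2)" by (rule sum_mono) (rule cheb1)
    also have "\<dots> \<le> q * T * m" unfolding T_def q_def N_def m_def by (rule var_total[OF pr dn g])
    finally show ?thesis .
  qed
  define Y where "Y = {M\<in>?Ms. real (card (bad M)) > 3 * N / 4}"
  have Ybound: "real (card Y) \<le> m * (16 / (3 * q * \<mu>))"
  proof -
    have "real (card Y) * (3 * N / 4) = (\<Sum>M\<in>Y. 3 * N / 4)" by simp
    also have "\<dots> \<le> (\<Sum>M\<in>Y. real (card (bad M)))" by (rule sum_mono) (auto simp: Y_def)
    also have "\<dots> \<le> (\<Sum>M\<in>?Ms. real (card (bad M)))"
      by (rule sum_mono2[OF fM]) (auto simp: Y_def)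
    finally have 1: "real (card Y) * (3 * N / 4) \<le> (\<Sum>M\<in>?Ms. real (card (bad M)))" .
    have pos: "(T * q / N / 2)^2 > 0" using T0 q0 N0 by simp
    have "real (card Y) * (3 * N / 4) * (T * q / N / 2)^2 \<le> q * T * m"
      using mult_right_mono[OF 1, of "(T * q / N / 2)^2"] pos sumbad by linarith
    then have "real (card Y) * ((3 * N / 4) * (T * q / N / 2)^2) \<le> q * T * m" by (simp add: mult.assoc)
    then have "real (card Y) \<le> q * T * m / ((3 * N / 4) * (T * q / N / 2)^2)"
      using pos N0 by (simp add: le_divide_eq)
    also have "q * T * m / ((3 * N / 4) * (T * q / N / 2)^2) = m * (16 / (3 * q * \<mu>))"
      unfolding muTN using N0 T0 q0 by (simp add: field_simps power2_eq_square)
    finally show ?thesis .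
  qed
  define Fail where "Fail = {M \<in> ?Ms. \<exists>a\<in>A. \<exists>b\<in>A. vsub p a b \<noteq> vzero \<and> vsub p a b \<in> perp p n (gW p n n' M)}"
  have Fbound: "real (card Fail) \<le> m * (C / q)"
    using fail_count[OF pr dn AV fA] unfolding Fail_def m_def C_def q_def cA by (simp add: field_simps)
  have "\<exists>M\<in>?Ms. M \<notin> Fail \<and> M \<notin> Y"
  proof (rule ccontr)
    assume "\<not> (\<exists>M\<in>?Ms. M \<notin> Fail \<and> M \<notin> Y)"
    then have "?Ms \<subseteq> Fail \<union> Y" by blast
    then have "card ?Ms \<le> card (Fail \<union> Y)" by (rule card_mono[rotated]) (auto simp: Fail_def Y_def fM)
    also have "\<dots> \<le> card Fail + card Y" by (rule card_Un_le)
    finally have "m \<le> real (card Fail) + real (card Y)" unfolding m_def by linarith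
    also have "\<dots> \<le> m * (C / q) + m * (16 / (3 * q * \<mu>))" using Fbound Ybound by linarith
    also have "\<dots> = m * (C / q + 16 / (3 * q * \<mu>))" by (simp add: distrib_left)
    also have "\<dots> < m * 1" using key m0 by (intro mult_strict_left_mono) auto
    finally show False by simp
  qed
  then obtain M where M: "M \<in> ?Ms" "M \<notin> Fail" "M \<notin> Y" by blast
  let ?W = "gW p n n' M"
  have dim: "subspace_dim p n ?W n'" by (rule gW_dim[OF p0 dn])
  have perpW: "{vsub p a b | a b. a \<in> A \<and> b \<in> A} \<inter> perp p n ?W = {vzero}"
  proof
    show "{vsub p a b | a b. a \<in> A \<and> b \<in> A} \<inter> perp p n ?W \<subseteq> {vzero}"
    proof
      fix x assume x: "x \<in> {vsub p a b | a b. a \<in> A \<and> b \<in> A} \<inter> perp p n ?W"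
      then obtain a b where ab: "a \<in> A" "b \<in> A" "x = vsub p a b" by blast
      show "x \<in> {vzero}"
      proof (rule ccontr)
        assume "x \<notin> {vzero}"
        then have "M \<in> Fail" using M(1) ab x unfolding Fail_def by blast
        then show False using M(2) by blast
      qed
    qed
    show "{vzero} \<subseteq> {vsub p a b | a b. a \<in> A \<and> b \<in> A} \<inter> perp p n ?W"
    proof -
      have "A \<noteq> {}" using cA k2 by auto
      then obtain a where a: "a \<in> A" by blast
      have "vzero \<in> {vsub p a b | a b. a \<in> A \<and> b \<in> A}" unfolding vsub_self[of p a, symmetric] using a by blast
      moreover have "vzero \<in> perp p n ?W"
        unfolding perp_def dotp_def using vzero_Fvec[OF p0] by (simp add: vzero_def)
      ultimately show ?thesis by blast
    qed
  qed
  have good: "real (card {t \<in> ?V. (\<Sum>m\<in>translate p t ?W. g m) \<ge> expect p n g * real (card ?W) / 2}) \<ge> real (p ^ n) / 4"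
  proof -
    have thr: "expect p n g * real (card ?W) / 2 = T * q / N / 2" using cW muTN unfolding \<mu>_def by simp
    have split: "card {t \<in> ?V. ?S M t \<ge> T * q / N / 2} + card (bad M) = card ?V"
    proof -
      have "card ({t \<in> ?V. ?S M t \<ge> T * q / N / 2} \<union> bad M) = card {t \<in> ?V. ?S M t \<ge> T * q / N / 2} + card (bad M)"
        by (rule card_Un_disjoint) (auto simp: bad_def fV)
      moreover have "{t \<in> ?V. ?S M t \<ge> T * q / N / 2} \<union> bad M = ?V" by (auto simp: bad_def)
      ultimately show ?thesis by simp
    qed
    have "real (card (bad M)) \<le> 3 * N / 4" using M(1,3) unfolding Y_def by auto
    moreover have "real (card {t \<in> ?V. ?S M t \<ge> T * q / N / 2}) + real (card (bad M)) = N"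
    proof -
      have "real (card {t \<in> ?V. ?S M t \<ge> T * q / N / 2} + card (bad M)) = real (card ?V)"
        using split by (simp only:)
      then show ?thesis unfolding N_def card_Fvec of_nat_add .
    qed
    ultimately have "real (card {t \<in> ?V. ?S M t \<ge> T * q / N / 2}) \<ge> N / 4" by linarith
    then show ?thesis unfolding thr N_def by simp
  qed
  show ?thesis using dim perpW good by blast
qed

end
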